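(* Let $b\ge 1$, let $L$ be a normalized Latin square of size $b$ over the alphabet $\mathcal A=\{a_1,\dots,a_b\}$, and let $M=\mathcal{E}(L)$ be its encoding matrix. Let $w$ be a word of length $m\ge 1$ over $\mathcal A$ and let $r\ge -1$ be an integer. (1) If $w$ is $r$-regular, then $L(w)$ is $(r+1)$-regular. (2) If $M$ is invertible (as a real matrix) and $L(w)$ is $(r+1)$-regular, then $w$ is $r$-regular. (3) If $M$ is not invertible, then there exist a positive integer $m'$ and a word $w'$ of length $m'$ over $\mathcal A$ such that $L(w')$ is $1$-regular but $w'$ is not $0$-regular.
   Context: Fix an alphabet $\mathcal A=\{a_1,\dots,a_b\}$ of $b$ letters, ordered $a_1<\dots<a_b$; identify $a_q$ with the integer $q$ when convenient. For a word $w=w_1\cdots w_m$ over $\mathcal A$ and an integer $r\ge -1$, $w$ is $r$-regular if for every $k=0,1,\dots,r$ the sum $\sum_{1\le t\le m,\ w_t=x} t^k$ is the same for all letters $x\in\mathcal A$ (a letter not occurring in $w$ contributes the empty sum $0$); every word is $(-1)$-regular. A Latin square of size $b$ over $\mathcal A$ is a $b\times b$ matrix with entries in $\mathcal A$ in which each letter occurs exactly once in each row and each column; it is normalized if its first column is $(a_1,\dots,a_b)^T$, i.e. $L_{q,1}=a_q$. For $k=1,\dots,b$ let $\pi_k$ be the permutation of $\mathcal A$ given by $\pi_k(a_q)=L_{q,k}$ (so $\pi_1=\mathrm{id}$ when $L$ is normalized). For a permutation $\pi$ of $\mathcal A$, $\pi(w_1\cdots w_m)=\pi(w_1)\cdots\pi(w_m)$,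 and $L(w)$ is the concatenation $w\,\pi_2(w)\,\pi_3(w)\cdots\pi_b(w)$, a word of length $bm$. The encoding matrix $M=\mathcal E(L)$ is the $b\times b$ integer matrix defined by $M_{ij}=x$ if and only if $L_{j,x}=a_i$, i.e. $M_{ij}$ is the index of the column in which the letter $a_i$ occurs in row $j$ of $L$. *)

theory Defs
  imports Main "Jordan_Normal_Form.Matrix"
begin

(* Alphabet a_1 < ... < a_b is identified with the naturals 1..b.
   A word is a list over {1..b}; position t (1-based) is w ! (t-1). *)

definition word_over :: "nat \<Rightarrow> nat list \<Rightarrow> bool" where
  "word_over b w \<longleftrightarrow> set w \<subseteq> {1..b}"

definition pos_power_sum :: "nat list \<Rightarrow> nat \<Rightarrow> nat \<Rightarrow> nat" where
  "pos_power_sum w x k = (\<Sum>t\<in>{1..length w}. if w ! (t - 1) = x then t ^ k else 0)"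

definition regular :: "nat \<Rightarrow> int \<Rightarrow> nat list \<Rightarrow> bool" where
  "regular b r w \<longleftrightarrow>
     (\<forall>k::nat. int k \<le> r \<longrightarrow>
        (\<forall>x\<in>{1..b}. \<forall>y\<in>{1..b}. pos_power_sum w x k = pos_power_sum w y k))"

(* Latin square L q k = entry in row q, column k, indices 1..b *)
definition latin_square :: "nat \<Rightarrow> (nat \<Rightarrow> nat \<Rightarrow> nat) \<Rightarrow> bool" where
  "latin_square b L \<longleftrightarrow>
     (\<forall>q\<in>{1..b}. bij_betw (\<lambda>k. L q k) {1..b} {1..b}) \<and>
     (\<forall>k\<in>{1..b}. bij_betw (\<lambda>q. L q k) {1..b} {1..b})"

definition normalized :: "nat \<Rightarrow> (nat \<Rightarrow> nat \<Rightarrow> nat) \<Rightarrow> bool" where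
  "normalized b L \<longleftrightarrow> (\<forall>q\<in>{1..b}. L q 1 = q)"

(* pi_k(a_q) = L_{q,k};  L(w) = w pi_2(w) ... pi_b(w) (pi_1 = id for normalized L) *)
definition latin_apply :: "nat \<Rightarrow> (nat \<Rightarrow> nat \<Rightarrow> nat) \<Rightarrow> nat list \<Rightarrow> nat list" where
  "latin_apply b L w = concat (map (\<lambda>k. map (\<lambda>x. L x k) w) [1..<b+1])"

definition enc :: "nat \<Rightarrow> (nat \<Rightarrow> nat \<Rightarrow> nat) \<Rightarrow> nat \<Rightarrow> nat \<Rightarrow> nat" where
  "enc b L i j = (THE x. x \<in> {1..b} \<and> L j x = i)"

(* encoding matrix as a real b x b matrix (0-based indices of mat) *)
definition enc_mat :: "nat \<Rightarrow> (nat \<Rightarrow> nat \<Rightarrow> nat) \<Rightarrow> real mat" where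
  "enc_mat b L = mat b b (\<lambda>(i, j). real (enc b L (i + 1) (j + 1)))"

end

theory Submission imports Defs "Jordan_Normal_Form.Determinant" begin

definition G :: "nat list \<Rightarrow> nat \<Rightarrow> (nat \<Rightarrow> nat) \<Rightarrow> nat" where
  "G u x g = (\<Sum>t<length u. if u ! t = x then g t else 0)"

lemma sum_split_add: "(\<Sum>t<(a::nat) + (n::nat). f t) = (\<Sum>t<a. f t) + (\<Sum>t<n. f (a + t)::nat)"
  by (induction n) auto

lemma G_append: "G (u @ v) x g = G u x g + G v x (\<lambda>t. g (length u + t))"
  unfolding G_def by (simp add: sum_split_add nth_append)

lemma pps_G: "pos_power_sum w x k = G w x (\<lambda>t. (t+1)^k)"
  unfolding pos_power_sum_def G_def
  by (auto simp: sum.atLeast1_atMost_eq intro!: sum.cong)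

lemma G_map: "G (map h w) x g = (\<Sum>t<length w. if h (w ! t) = x then g t else 0)"
  unfolding G_def by simp

lemma G_blocks: "G (concat (map (\<lambda>k. map (\<lambda>y. L y k) w) [1..<n+1])) x g
   = (\<Sum>k\<in>{1..n}. \<Sum>t<length w. if L (w ! t) k = x then g ((k-1) * length w + t) else 0)"
proof (induction n)
  case 0 then show ?case by (simp add: G_def)
next
  case (Suc n)
  have len: "length (concat (map (\<lambda>k. map (\<lambda>y. L y k) w) [1..<n+1])) = n * length w"
    by (induction n) (auto simp: length_concat)
  have e: "[1..<Suc n+1] = [1..<n+1] @ [n+1]" by simp
  show ?case unfolding e using Suc len by (simp add: G_append G_map del: upt_Suc, auto intro!: sum.cong simp: algebra_simps)
qed

lemma G_replicate: "G (replicate n q) x g = (if q = x then (\<Sum>t<n. g t) else 0)"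
  unfolding G_def by auto

definition sig :: "nat \<Rightarrow> (nat \<Rightarrow> nat \<Rightarrow> nat) \<Rightarrow> nat \<Rightarrow> nat \<Rightarrow> nat" where
  "sig b L k x = (THE q. q \<in> {1..b} \<and> L q k = x)"

lemma col_bij: "latin_square b L \<Longrightarrow> k \<in> {1..b} \<Longrightarrow> bij_betw (\<lambda>q. L q k) {1..b} {1..b}"
  unfolding latin_square_def by blast

lemma row_bij: "latin_square b L \<Longrightarrow> q \<in> {1..b} \<Longrightarrow> bij_betw (\<lambda>k. L q k) {1..b} {1..b}"
  unfolding latin_square_def by blast

lemma sig_prop:
  assumes "latin_square b L" "k \<in> {1..b}" "x \<in> {1..b}"
  shows "sig b L k x \<in> {1..b} \<and> L (sig b L k x) k = x"
proof -
  have bij: "bij_betw (\<lambda>q. L q k) {1..b} {1..b}" using col_bij assms by blast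
  then have "x \<in> (\<lambda>q. L q k) ` {1..b}" using assms(3) by (simp add: bij_betw_def)
  then obtain q where q: "q \<in> {1..b}" "L q k = x" by blast
  have inj: "inj_on (\<lambda>q. L q k) {1..b}" using bij by (simp add: bij_betw_def)
  have "\<exists>!q. q \<in> {1..b} \<and> L q k = x"
  proof (rule ex1I[of _ q])
    show "q \<in> {1..b} \<and> L q k = x" using q by simp
    fix y assume "y \<in> {1..b} \<and> L y k = x"
    then show "y = q" using inj_onD[OF inj, of y q] q by simp
  qed
  then show ?thesis unfolding sig_def by (rule theI')
qed

lemma sig_iff:
  assumes "latin_square b L" "k \<in> {1..b}" "x \<in> {1..b}" "q \<in> {1..b}"
  shows "(L q k = x) = (q = sig b L k x)"
proof -
  have inj: "inj_on (\<lambda>q. L q k) {1..b}" using col_bij[OF assms(1,2)] by (simp add: bij_betw_def)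
  have s: "sig b L k x \<in> {1..b}" "L (sig b L k x) k = x" using sig_prop[OF assms(1-3)] by auto
  show ?thesis
  proof
    assume "L q k = x" then show "q = sig b L k x" using inj_onD[OF inj, of q "sig b L k x"] s assms(4) by simp
  next
    assume "q = sig b L k x" then show "L q k = x" using s by simp
  qed
qed

lemma enc_prop:
  assumes "latin_square b L" "q \<in> {1..b}" "x \<in> {1..b}"
  shows "enc b L x q \<in> {1..b} \<and> L q (enc b L x q) = x"
proof -
  have bij: "bij_betw (\<lambda>k. L q k) {1..b} {1..b}" using row_bij assms by blast
  then have "x \<in> (\<lambda>k. L q k) ` {1..b}" using assms(3) by (simp add: bij_betw_def)
  then obtain k where k: "k \<in> {1..b}" "L q k = x" by blast
  have inj: "inj_on (\<lambda>k. L q k) {1..b}" using bij by (simp add: bij_betw_def)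
  have "\<exists>!k. k \<in> {1..b} \<and> L q k = x"
  proof (rule ex1I[of _ k])
    show "k \<in> {1..b} \<and> L q k = x" using k by simp
    fix y assume "y \<in> {1..b} \<and> L q y = x"
    then show "y = k" using inj_onD[OF inj, of y k] k by simp
  qed
  then show ?thesis unfolding enc_def by (rule theI')
qed

lemma sig_enc:
  assumes "latin_square b L" "q \<in> {1..b}" "x \<in> {1..b}"
  shows "sig b L (enc b L x q) x = q"
  using sig_iff[OF assms(1) _ assms(3) assms(2), of "enc b L x q"] enc_prop[OF assms] by auto

lemma bij_enc:
  assumes "latin_square b L" "x \<in> {1..b}"
  shows "bij_betw (\<lambda>q. enc b L x q) {1..b} {1..b}"
proof -
  have inj: "inj_on (\<lambda>q. enc b L x q) {1..b}"
  proof (rule inj_onI)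
    fix q q' assume "q \<in> {1..b}" "q' \<in> {1..b}" "enc b L x q = enc b L x q'"
    then show "q = q'" using sig_enc[OF assms(1) _ assms(2)] by metis
  qed
  have sub: "(\<lambda>q. enc b L x q) ` {1..b} \<subseteq> {1..b}" using enc_prop[OF assms(1) _ assms(2)] by auto
  have "(\<lambda>q. enc b L x q) ` {1..b} = {1..b}" by (rule endo_inj_surj[OF _ sub inj]) simp
  then show ?thesis using inj unfolding bij_betw_def by simp
qed

lemma reindex:
  assumes "latin_square b L" "x \<in> {1..b}"
  shows "(\<Sum>k\<in>{1..b}. f k (sig b L k x)) = (\<Sum>q\<in>{1..b}. f (enc b L x q) q)"
proof -
  have "(\<Sum>q\<in>{1..b}. (\<lambda>k. f k (sig b L k x)) (enc b L x q)) = (\<Sum>k\<in>{1..b}. f k (sig b L k x))"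
    by (rule sum.reindex_bij_betw[OF bij_enc[OF assms]])
  moreover have "(\<Sum>q\<in>{1..b}. (\<lambda>k. f k (sig b L k x)) (enc b L x q)) = (\<Sum>q\<in>{1..b}. f (enc b L x q) q)"
    by (rule sum.cong) (auto simp: sig_enc[OF assms(1) _ assms(2)])
  ultimately show ?thesis by simp
qed

definition T :: "nat \<Rightarrow> (nat \<Rightarrow> nat \<Rightarrow> nat) \<Rightarrow> nat list \<Rightarrow> nat \<Rightarrow> nat \<Rightarrow> nat \<Rightarrow> nat" where
  "T b L w x j i = (\<Sum>k\<in>{1..b}. ((k-1) * length w)^(j-i) * pos_power_sum w (sig b L k x) i)"

lemma pps_lt: "pos_power_sum w q i = (\<Sum>t<length w. if w ! t = q then (t+1)^i else 0)"
  unfolding pps_G G_def ..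

lemma formula:
  assumes ls: "latin_square b L" and wo: "word_over b w" and x: "x \<in> {1..b}"
  shows "pos_power_sum (latin_apply b L w) x j = (\<Sum>i\<le>j. (j choose i) * T b L w x j i)"
proof -
  let ?m = "length w"
  have "pos_power_sum (latin_apply b L w) x j
     = (\<Sum>k\<in>{1..b}. \<Sum>t<?m. if L (w ! t) k = x then ((k-1) * ?m + t + 1)^j else 0)"
    unfolding pps_G latin_apply_def G_blocks by simp
  also have "\<dots> = (\<Sum>k\<in>{1..b}. \<Sum>t<?m. \<Sum>i\<le>j. (j choose i) * (((k-1)*?m)^(j-i) *
                     (if w ! t = sig b L k x then (t+1)^i else 0)))"
  proof (intro sum.cong refl)
    fix k t assume k: "k \<in> {1..b}" and t: "t \<in> {..<?m}"
    have "w ! t \<in> set w" using t by simp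
    then have wt: "w ! t \<in> {1..b}" using wo unfolding word_over_def by blast
    have iff: "(L (w ! t) k = x) = (w ! t = sig b L k x)" by (rule sig_iff[OF ls k x wt])
    show "(if L (w ! t) k = x then ((k-1) * ?m + t + 1)^j else 0) =
       (\<Sum>i\<le>j. (j choose i) * (((k-1)*?m)^(j-i) * (if w ! t = sig b L k x then (t+1)^i else 0)))"
    proof (cases "w ! t = sig b L k x")
      case True
      have "((k-1) * ?m + t + 1)^j = ((t+1) + (k-1) * ?m)^j" by (simp add: algebra_simps)
      also have "\<dots> = (\<Sum>i\<le>j. of_nat (j choose i) * (t+1)^i * ((k-1) * ?m)^(j-i))"
        by (rule binomial_ring)
      finally show ?thesis using True iff by (simp add: algebra_simps)
    next
      case False then show ?thesis using iff by simp
    qed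
  qed
  also have "\<dots> = (\<Sum>k\<in>{1..b}. \<Sum>i\<le>j. (j choose i) * (((k-1)*?m)^(j-i) * pos_power_sum w (sig b L k x) i))"
    unfolding pps_lt sum_distrib_left
    by (rule sum.cong[OF refl], rule sum.swap)
  also have "\<dots> = (\<Sum>i\<le>j. (j choose i) * T b L w x j i)"
    unfolding T_def sum_distrib_left by (rule sum.swap)
  finally show ?thesis .
qed

lemma T_const:
  assumes ls: "latin_square b L" and x: "x \<in> {1..b}" and y: "y \<in> {1..b}"
    and c: "\<forall>q\<in>{1..b}. \<forall>q'\<in>{1..b}. pos_power_sum w q i = pos_power_sum w q' i"
  shows "T b L w x j i = T b L w y j i"
  unfolding T_def
proof (intro sum.cong refl)
  fix k assume k: "k \<in> {1..b}"
  show "((k-1) * length w)^(j-i) * pos_power_sum w (sig b L k x) i =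
        ((k-1) * length w)^(j-i) * pos_power_sum w (sig b L k y) i"
    using c sig_prop[OF ls k x] sig_prop[OF ls k y] by metis
qed

lemma T_diag:
  assumes ls: "latin_square b L" and x: "x \<in> {1..b}"
  shows "T b L w x j j = (\<Sum>q\<in>{1..b}. pos_power_sum w q j)"
  unfolding T_def using reindex[OF ls x, of "\<lambda>k q. pos_power_sum w q j"] by simp

lemma part1:
  assumes ls: "latin_square b L" and wo: "word_over b w" and reg: "regular b r w"
  shows "regular b (r + 1) (latin_apply b L w)"
  unfolding regular_def
proof (intro allI impI ballI)
  fix j :: nat and x y assume j: "int j \<le> r + 1" and x: "x \<in> {1..b}" and y: "y \<in> {1..b}"
  have "(\<Sum>i\<le>j. (j choose i) * T b L w x j i) = (\<Sum>i\<le>j. (j choose i) * T b L w y j i)"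
  proof (rule sum.cong[OF refl])
    fix i assume i: "i \<in> {..j}"
    show "(j choose i) * T b L w x j i = (j choose i) * T b L w y j i"
    proof (cases "i < j")
      case True
      then have "int i \<le> r" using j by linarith
      then have c: "\<forall>q\<in>{1..b}. \<forall>q'\<in>{1..b}. pos_power_sum w q i = pos_power_sum w q' i"
        using reg unfolding regular_def by (elim allE[of _ i]) (rule mp)
      show ?thesis using T_const[OF ls x y c] by (rule arg_cong)
    next
      case False then have "i = j" using i by simp
      then show ?thesis using T_diag[OF ls x, of w j] T_diag[OF ls y, of w j] by (simp only:)
    qed
  qed
  then show "pos_power_sum (latin_apply b L w) x j = pos_power_sum (latin_apply b L w) y j"
    using formula[OF ls wo x] formula[OF ls wo y] by simp
qed

lemma kernel_trivial:
  assumes inv: "invertible_mat (A :: real mat)" and A: "A \<in> carrier_mat n n"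
    and z: "z \<in> carrier_vec n" and Az: "A *\<^sub>v z = 0\<^sub>v n"
  shows "z = 0\<^sub>v n"
proof -
  obtain B where AB: "A * B = 1\<^sub>m (dim_row A)" and BA: "B * A = 1\<^sub>m (dim_row B)"
    using inv unfolding invertible_mat_def inverts_mat_def by blast
  have "dim_col (B * A) = n" using A by simp
  then have rB: "dim_row B = n" using BA by simp
  have "dim_col (A * B) = dim_col B" by simp
  then have cB: "dim_col B = n" using AB A by simp
  have B: "B \<in> carrier_mat n n" using rB cB by auto
  have "z = 1\<^sub>m n *\<^sub>v z" using z by simp
  also have "\<dots> = (B * A) *\<^sub>v z" using BA rB by simp
  also have "\<dots> = B *\<^sub>v (A *\<^sub>v z)" using B A z by simp
  also have "\<dots> = B *\<^sub>v 0\<^sub>v n" using Az by simp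
  also have "\<dots> = 0\<^sub>v n" using B by (intro eq_vecI) auto
  finally show ?thesis .
qed

lemma shift_sum: "(\<Sum>l\<in>{0..<(b::nat)}. f (l+1)) = (\<Sum>q\<in>{1..b}. f q)"
  using sum.atLeast1_atMost_eq[of f b] by (simp add: atLeast0LessThan)

lemma enc_mat_carrier: "enc_mat b L \<in> carrier_mat b b"
  unfolding enc_mat_def by simp

lemma dim_enc[simp]: "dim_row (enc_mat b L) = b" "dim_col (enc_mat b L) = b"
  unfolding enc_mat_def by simp_all

lemma enc_mat_mult:
  assumes i: "i < b" and z: "z \<in> carrier_vec b"
  shows "(enc_mat b L *\<^sub>v z) $ i = (\<Sum>q\<in>{1..b}. real (enc b L (i+1) q) * z $ (q - 1))"
proof -
  have "(enc_mat b L *\<^sub>v z) $ i = (\<Sum>l\<in>{0..<b}. real (enc b L (i+1) (l+1)) * z $ l)"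
    using i z unfolding enc_mat_def by (simp add: scalar_prod_def)
  also have "\<dots> = (\<Sum>l\<in>{0..<b}. (\<lambda>q. real (enc b L (i+1) q) * z $ (q - 1)) (l+1))" by simp
  also have "\<dots> = (\<Sum>q\<in>{1..b}. real (enc b L (i+1) q) * z $ (q - 1))" by (rule shift_sum)
  finally show ?thesis .
qed

lemma row_sum_enc:
  assumes ls: "latin_square b L" and x: "x \<in> {1..b}"
  shows "(\<Sum>q\<in>{1..b}. enc b L x q) = (\<Sum>k\<in>{1..b}. k)"
  using reindex[OF ls x, of "\<lambda>k q. k"] by simp

lemma lin_part:
  assumes ls: "latin_square b L" and b: "b \<ge> 1" and inv: "invertible_mat (enc_mat b L)"
    and c: "\<forall>x\<in>{1..b}. (\<Sum>q\<in>{1..b}. real (enc b L x q) * p q) = c"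
  shows "\<forall>q\<in>{1..b}. \<forall>q'\<in>{1..b}. p q = p q'"
proof -
  define s :: real where "s = real (\<Sum>k\<in>{1..b}. k)"
  have "(1::nat) \<le> (\<Sum>k\<in>{1..b}. k)" using member_le_sum[of 1 "{1..b}" "\<lambda>k. k"] b by simp
  then have "(0::nat) < (\<Sum>k\<in>{1..b}. k)" by linarith
  then have spos: "s > 0" unfolding s_def by (simp only: of_nat_0_less_iff)
  define z where "z = vec b (\<lambda>i. s * p (i+1) - c)"
  have zc: "z \<in> carrier_vec b" unfolding z_def by simp
  have "enc_mat b L *\<^sub>v z = 0\<^sub>v b"
  proof (rule eq_vecI)
    show "dim_vec (enc_mat b L *\<^sub>v z) = dim_vec (0\<^sub>v b)" using enc_mat_carrier zc by simp
    fix i assume "i < dim_vec (0\<^sub>v b)"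
    then have i: "i < b" by simp
    have x: "i + 1 \<in> {1..b}" using i by simp
    have "(enc_mat b L *\<^sub>v z) $ i = (\<Sum>q\<in>{1..b}. real (enc b L (i+1) q) * (s * p q - c))"
      using enc_mat_mult[OF i zc] unfolding z_def by (auto intro!: sum.cong)
    also have "\<dots> = s * (\<Sum>q\<in>{1..b}. real (enc b L (i+1) q) * p q) - c * real (\<Sum>q\<in>{1..b}. enc b L (i+1) q)"
      by (simp add: algebra_simps sum_subtractf sum_distrib_left)
    also have "\<dots> = 0" using c x row_sum_enc[OF ls x] unfolding s_def by simp
    finally show "(enc_mat b L *\<^sub>v z) $ i = 0\<^sub>v b $ i" using i by simp
  qed
  then have "z = 0\<^sub>v b" by (rule kernel_trivial[OF inv enc_mat_carrier zc])
  then have "\<forall>q\<in>{1..b}. s * p q - c = 0"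
  proof (intro ballI)
    fix q assume "z = 0\<^sub>v b" "q \<in> {1..b}"
    then have "q - 1 < b" by auto
    then have "z $ (q - 1) = 0" using \<open>z = 0\<^sub>v b\<close> by simp
    moreover have "Suc (q - 1) = q" using \<open>q \<in> {1..b}\<close> by simp
    ultimately show "s * p q - c = 0" using \<open>q - 1 < b\<close> unfolding z_def by simp
  qed
  then have "\<forall>q\<in>{1..b}. p q = c / s" using spos by (simp add: field_simps)
  then show ?thesis by simp
qed

lemma sum_split_top: "(\<Sum>i\<le>Suc j. f i) = (\<Sum>i<j. f i) + f j + (f (Suc j) :: nat)"
proof -
  have "(\<Sum>i\<le>j. f i) = (\<Sum>i<Suc j. f i)" by (simp only: lessThan_Suc_atMost)
  then show ?thesis by (simp add: sum.atMost_Suc)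
qed

lemma part2:
  assumes ls: "latin_square b L" and wo: "word_over b w" and b: "b \<ge> 1" and m: "length w \<ge> 1"
    and inv: "invertible_mat (enc_mat b L)" and reg: "regular b (r + 1) (latin_apply b L w)"
  shows "regular b r w"
proof -
  let ?m = "length w"
  have wne: "w \<noteq> []" using m by auto
  have "\<forall>x\<in>{1..b}. \<forall>y\<in>{1..b}. pos_power_sum w x j = pos_power_sum w y j" if "int j \<le> r" for j
    using that
  proof (induction j rule: less_induct)
    case (less j)
    have IH: "\<forall>q\<in>{1..b}. \<forall>q'\<in>{1..b}. pos_power_sum w q i = pos_power_sum w q' i" if "i < j" for i
    proof -
      have "int i \<le> r" using that less.prems by simp
      then show ?thesis by (rule less.IH[OF that])
    qed
    have ksplit: "k * a = (k-1)*a + a" if "k \<in> {1..b}" for k a :: nat using that by (cases k) auto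
    define E where "E x = (\<Sum>k\<in>{1..b}. k * pos_power_sum w (sig b L k x) j)" for x
    have Eeq: "E x = E y" if x: "x \<in> {1..b}" and y: "y \<in> {1..b}" for x y
    proof -
      have "int (Suc j) \<le> r + 1" using less.prems by simp
      moreover have "int (Suc j) \<le> r + 1 \<longrightarrow> (\<forall>x\<in>{1..b}. \<forall>y\<in>{1..b}.
          pos_power_sum (latin_apply b L w) x (Suc j) = pos_power_sum (latin_apply b L w) y (Suc j))"
        using reg unfolding regular_def by (rule spec)
      ultimately have "\<forall>x\<in>{1..b}. \<forall>y\<in>{1..b}.
          pos_power_sum (latin_apply b L w) x (Suc j) = pos_power_sum (latin_apply b L w) y (Suc j)"
        by (rule rev_mp)
      then have pe: "pos_power_sum (latin_apply b L w) x (Suc j) = pos_power_sum (latin_apply b L w) y (Suc j)"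
        using x y by blast
      have "(\<Sum>i\<le>Suc j. (Suc j choose i) * T b L w x (Suc j) i) = pos_power_sum (latin_apply b L w) x (Suc j)"
        using formula[OF ls wo x] by (rule sym)
      also have "\<dots> = pos_power_sum (latin_apply b L w) y (Suc j)" by (rule pe)
      also have "\<dots> = (\<Sum>i\<le>Suc j. (Suc j choose i) * T b L w y (Suc j) i)"
        by (rule formula[OF ls wo y])
      finally have "(\<Sum>i\<le>Suc j. (Suc j choose i) * T b L w x (Suc j) i) = (\<Sum>i\<le>Suc j. (Suc j choose i) * T b L w y (Suc j) i)" .
      moreover have "(\<Sum>i<j. (Suc j choose i) * T b L w x (Suc j) i) = (\<Sum>i<j. (Suc j choose i) * T b L w y (Suc j) i)"
      proof (rule sum.cong[OF refl])
        fix i assume "i \<in> {..<j}"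
        then have "i < j" by simp
        show "(Suc j choose i) * T b L w x (Suc j) i = (Suc j choose i) * T b L w y (Suc j) i"
          using T_const[OF ls x y IH[OF \<open>i < j\<close>]] by (rule arg_cong)
      qed
      moreover have "T b L w x (Suc j) (Suc j) = T b L w y (Suc j) (Suc j)"
        using T_diag[OF ls x, of w "Suc j"] T_diag[OF ls y, of w "Suc j"] by (simp only:)
      ultimately have "(Suc j choose j) * T b L w x (Suc j) j = (Suc j choose j) * T b L w y (Suc j) j"
        unfolding sum_split_top binomial_n_n by linarith
      moreover have cj: "Suc j choose j = Suc j" using binomial_symmetric[of j "Suc j"] by simp
      ultimately have "Suc j * T b L w x (Suc j) j = Suc j * T b L w y (Suc j) j" by (simp only:)
      then have Teq: "T b L w x (Suc j) j = T b L w y (Suc j) j" by (simp only: mult_cancel1 nat.distinct(1) simp_thms) blast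
      have Tform: "T b L w z (Suc j) j = ?m * (\<Sum>k\<in>{1..b}. (k - 1) * pos_power_sum w (sig b L k z) j)" for z
        unfolding T_def sum_distrib_left by (intro sum.cong refl) (simp add: mult.assoc mult.left_commute)
      have D: "(\<Sum>k\<in>{1..b}. (k - 1) * pos_power_sum w (sig b L k x) j) = (\<Sum>k\<in>{1..b}. (k - 1) * pos_power_sum w (sig b L k y) j)"
        using Teq wne unfolding Tform by simp
      have Esplit: "E z = (\<Sum>k\<in>{1..b}. (k - 1) * pos_power_sum w (sig b L k z) j) + (\<Sum>q\<in>{1..b}. pos_power_sum w q j)"
        if z: "z \<in> {1..b}" for z
      proof -
        have "E z = (\<Sum>k\<in>{1..b}. (k - 1) * pos_power_sum w (sig b L k z) j + pos_power_sum w (sig b L k z) j)"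
          unfolding E_def by (rule sum.cong[OF refl]) (simp add: ksplit)
        also have "\<dots> = (\<Sum>k\<in>{1..b}. (k - 1) * pos_power_sum w (sig b L k z) j) + (\<Sum>k\<in>{1..b}. pos_power_sum w (sig b L k z) j)"
          by (rule sum.distrib)
        also have "(\<Sum>k\<in>{1..b}. pos_power_sum w (sig b L k z) j) = (\<Sum>q\<in>{1..b}. pos_power_sum w q j)"
          using reindex[OF ls z, of "\<lambda>k q. pos_power_sum w q j"] by simp
        finally show ?thesis .
      qed
      show ?thesis using Esplit[OF x] Esplit[OF y] D by simp
    qed
    have Eenc: "E x = (\<Sum>q\<in>{1..b}. enc b L x q * pos_power_sum w q j)" if x: "x \<in> {1..b}" for x
      unfolding E_def using reindex[OF ls x, of "\<lambda>k q. k * pos_power_sum w q j"] by simp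
    have one: "1 \<in> {1..b}" using b by simp
    have "\<forall>x\<in>{1..b}. (\<Sum>q\<in>{1..b}. real (enc b L x q) * real (pos_power_sum w q j)) = real (E 1)"
    proof
      fix x assume x: "x \<in> {1..b}"
      have "(\<Sum>q\<in>{1..b}. real (enc b L x q) * real (pos_power_sum w q j)) = real (E x)"
        unfolding Eenc[OF x] by simp
      then show "(\<Sum>q\<in>{1..b}. real (enc b L x q) * real (pos_power_sum w q j)) = real (E 1)"
        using Eeq[OF x one] by simp
    qed
    from lin_part[OF ls b inv this]
    have h: "\<forall>q\<in>{1..b}. \<forall>q'\<in>{1..b}. real (pos_power_sum w q j) = real (pos_power_sum w q' j)" .
    show ?case
    proof (intro ballI)
      fix q q' assume "q \<in> {1..b}" "q' \<in> {1..b}"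
      then have "real (pos_power_sum w q j) = real (pos_power_sum w q' j)" using h by blast
      then show "pos_power_sum w q j = pos_power_sum w q' j" by (simp only: of_nat_eq_iff)
    qed
  qed
  then show ?thesis unfolding regular_def by blast
qed


lemma Esplit_gen:
  assumes ls: "latin_square b L" and z: "z \<in> {1..b}"
  shows "(\<Sum>q\<in>{1..b}. enc b L z q * pos_power_sum w q j) =
     (\<Sum>k\<in>{1..b}. (k - 1) * pos_power_sum w (sig b L k z) j) + (\<Sum>q\<in>{1..b}. pos_power_sum w q j)"
proof -
  have ksplit: "k * a = (k-1)*a + a" if "k \<in> {1..b}" for k a :: nat using that by (cases k) auto
  have "(\<Sum>q\<in>{1..b}. enc b L z q * pos_power_sum w q j) = (\<Sum>k\<in>{1..b}. k * pos_power_sum w (sig b L k z) j)"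
    using reindex[OF ls z, of "\<lambda>k q. k * pos_power_sum w q j"] by simp
  also have "\<dots> = (\<Sum>k\<in>{1..b}. (k - 1) * pos_power_sum w (sig b L k z) j + pos_power_sum w (sig b L k z) j)"
    by (rule sum.cong[OF refl]) (simp add: ksplit)
  also have "\<dots> = (\<Sum>k\<in>{1..b}. (k - 1) * pos_power_sum w (sig b L k z) j) + (\<Sum>k\<in>{1..b}. pos_power_sum w (sig b L k z) j)"
    by (rule sum.distrib)
  also have "(\<Sum>k\<in>{1..b}. pos_power_sum w (sig b L k z) j) = (\<Sum>q\<in>{1..b}. pos_power_sum w q j)"
    using reindex[OF ls z, of "\<lambda>k q. pos_power_sum w q j"] by simp
  finally show ?thesis .
qed

lemma reg1:
  assumes ls: "latin_square b L" and wo: "word_over b w"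
    and Ecst: "\<And>x y. x \<in> {1..b} \<Longrightarrow> y \<in> {1..b} \<Longrightarrow>
        (\<Sum>q\<in>{1..b}. enc b L x q * pos_power_sum w q 0) = (\<Sum>q\<in>{1..b}. enc b L y q * pos_power_sum w q 0)"
  shows "regular b 1 (latin_apply b L w)"
  unfolding regular_def
proof (intro allI impI ballI)
  fix j :: nat and x y assume j: "int j \<le> 1" and x: "x \<in> {1..b}" and y: "y \<in> {1..b}"
  let ?m = "length w"
  define D where "D z = (\<Sum>k\<in>{1..b}. (k - 1) * pos_power_sum w (sig b L k z) 0)" for z
  have Tform: "T b L w z 1 0 = ?m * D z" for z
    unfolding T_def D_def sum_distrib_left by (intro sum.cong refl) (simp add: mult.assoc mult.left_commute)
  have Deq: "D x = D y"
    using Esplit_gen[OF ls x, of w 0] Esplit_gen[OF ls y, of w 0] Ecst[OF x y] unfolding D_def by simp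
  have S: "pos_power_sum (latin_apply b L w) z j = (if j = 0 then T b L w z 0 0 else T b L w z 1 0 + T b L w z 1 1)"
    if z: "z \<in> {1..b}" for z
  proof (cases "j = 0")
    case True then show ?thesis using formula[OF ls wo z, of 0] by simp
  next
    case False then have "j = Suc 0" using j by simp
    then show ?thesis using formula[OF ls wo z, of "Suc 0"] unfolding sum_split_top by simp
  qed
  show "pos_power_sum (latin_apply b L w) x j = pos_power_sum (latin_apply b L w) y j"
    unfolding S[OF x] S[OF y] Tform T_diag[OF ls x] T_diag[OF ls y] using Deq by simp
qed


lemma not_inv_det:
  assumes "\<not> invertible_mat (enc_mat b L)"
  shows "det (enc_mat b L) = 0"
proof (rule ccontr)
  assume "det (enc_mat b L) \<noteq> 0"
  from det_non_zero_imp_unit[OF enc_mat_carrier this, of "()"]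
  obtain B where B: "B \<in> carrier_mat b b" "B * enc_mat b L = 1\<^sub>m b" "enc_mat b L * B = 1\<^sub>m b"
    unfolding Units_def ring_mat_def by auto
  have "invertible_mat (enc_mat b L)"
    unfolding invertible_mat_def inverts_mat_def square_mat.simps using B by auto
  with assms show False by simp
qed

definition enc_imat :: "nat \<Rightarrow> (nat \<Rightarrow> nat \<Rightarrow> nat) \<Rightarrow> int mat" where
  "enc_imat b L = mat b b (\<lambda>(i, j). int (enc b L (i + 1) (j + 1)))"

lemma int_kernel:
  assumes "\<not> invertible_mat (enc_mat b L)"
  shows "\<exists>v. v \<in> carrier_vec b \<and> v \<noteq> 0\<^sub>v b \<and> enc_imat b L *\<^sub>v v = 0\<^sub>v b"
proof -
  have e: "enc_mat b L = map_mat of_int (enc_imat b L)"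
    unfolding enc_mat_def enc_imat_def by (rule eq_matI) auto
  have "of_int (det (enc_imat b L)) = (0::real)"
    using not_inv_det[OF assms] unfolding e of_int_hom.hom_det by simp
  then have "det (enc_imat b L) = 0" by simp
  moreover have "enc_imat b L \<in> carrier_mat b b" unfolding enc_imat_def by simp
  ultimately show ?thesis using det_0_iff_vec_prod_zero by blast
qed

lemma enc_imat_mult:
  assumes i: "i < b" and z: "z \<in> carrier_vec b"
  shows "(enc_imat b L *\<^sub>v z) $ i = (\<Sum>q\<in>{1..b}. int (enc b L (i+1) q) * z $ (q - 1))"
proof -
  have "(enc_imat b L *\<^sub>v z) $ i = (\<Sum>l\<in>{0..<b}. int (enc b L (i+1) (l+1)) * z $ l)"
    using i z unfolding enc_imat_def by (simp add: scalar_prod_def)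
  also have "\<dots> = (\<Sum>l\<in>{0..<b}. (\<lambda>q. int (enc b L (i+1) q) * z $ (q - 1)) (l+1))" by simp
  also have "\<dots> = (\<Sum>q\<in>{1..b}. int (enc b L (i+1) q) * z $ (q - 1))" by (rule shift_sum)
  finally show ?thesis .
qed


lemma G_reps: "G (concat (map (\<lambda>q. replicate (N q) q) [1..<n+1])) x (\<lambda>_. 1) = (\<Sum>q\<in>{1..n}. if q = x then N q else 0)"
proof (induction n)
  case 0 then show ?case by (simp add: G_def)
next
  case (Suc n)
  have e: "[1..<Suc n+1] = [1..<n+1] @ [n+1]" by simp
  show ?case unfolding e using Suc by (simp add: G_append G_replicate del: upt_Suc)
qed

lemma len_reps: "length (concat (map (\<lambda>q. replicate (N q) q) [1..<n+1])) = (\<Sum>q\<in>{1..n}. N q)"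
proof (induction n)
  case 0 then show ?case by simp
next
  case (Suc n)
  have e: "[1..<Suc n+1] = [1..<n+1] @ [n+1]" by simp
  show ?case unfolding e using Suc by (simp del: upt_Suc)
qed

lemma part3:
  assumes ls: "latin_square b L" and b: "b \<ge> 1" and ninv: "\<not> invertible_mat (enc_mat b L)"
  shows "\<exists>m' w'. m' > 0 \<and> length w' = m' \<and> word_over b w' \<and>
                  regular b 1 (latin_apply b L w') \<and> \<not> regular b 0 w'"
proof -
  obtain v where v: "v \<in> carrier_vec b" "v \<noteq> 0\<^sub>v b" "enc_imat b L *\<^sub>v v = 0\<^sub>v b"
    using int_kernel[OF ninv] by blast
  define U where "U q = v $ (q - 1)" for q
  have ker: "(\<Sum>q\<in>{1..b}. int (enc b L x q) * U q) = 0" if x: "x \<in> {1..b}" for x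
  proof -
    have i: "x - 1 < b" using x by auto
    have "(enc_imat b L *\<^sub>v v) $ (x - 1) = 0" using v(3) i by simp
    moreover have "x - 1 + 1 = x" using x by auto
    ultimately show ?thesis using enc_imat_mult[OF i v(1), of L] unfolding U_def by simp
  qed
  have nz: "\<exists>q\<in>{1..b}. U q \<noteq> 0"
  proof (rule ccontr)
    assume "\<not> ?thesis"
    then have z: "U q = 0" if "q \<in> {1..b}" for q using that by blast
    have "v = 0\<^sub>v b"
    proof (rule eq_vecI)
      fix i assume "i < dim_vec (0\<^sub>v b)"
      then have i: "i < b" by simp
      then have "U (i + 1) = 0" using z by simp
      then show "v $ i = 0\<^sub>v b $ i" using i unfolding U_def by simp
    qed (use v(1) in simp)
    with v(2) show False by simp
  qed
  define s where "s = (\<Sum>k\<in>{1..b}. k)"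
  have "(1::nat) \<le> s" unfolding s_def using member_le_sum[of 1 "{1..b}" "\<lambda>k. k"] b by simp
  then have spos: "int s > 0" by simp
  have rs: "(\<Sum>q\<in>{1..b}. int (enc b L x q)) = int s" if x: "x \<in> {1..b}" for x
  proof -
    have "(\<Sum>q\<in>{1..b}. enc b L x q) = s" using row_sum_enc[OF ls x] unfolding s_def .
    then show ?thesis by (simp only: of_nat_sum[symmetric])
  qed
  have noncst: "\<exists>q\<in>{1..b}. \<exists>q'\<in>{1..b}. U q \<noteq> U q'"
  proof (rule ccontr)
    assume "\<not> ?thesis"
    moreover have one: "1 \<in> {1..b}" using b by simp
    ultimately have c0: "\<forall>q\<in>{1..b}. U q = U 1" by blast
    obtain c where cdef: "c = U 1" by blast
    have c: "U q = c" if "q \<in> {1..b}" for q using c0 that cdef by blast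
    have "(\<Sum>q\<in>{1..b}. int (enc b L 1 q) * U q) = (\<Sum>q\<in>{1..b}. int (enc b L 1 q)) * c"
      unfolding sum_distrib_right by (rule sum.cong[OF refl]) (simp add: c)
    then have "int s * c = 0" using ker[OF one] rs[OF one] by simp
    then have "c = 0" using spos by simp
    obtain q where "q \<in> {1..b}" "U q \<noteq> 0" using nz by blast
    then show False using c \<open>c = 0\<close> by blast
  qed
  define mn where "mn = Min (U ` {1..b})"
  have mn: "mn \<le> U q" if "q \<in> {1..b}" for q unfolding mn_def using that by simp
  define N where "N q = nat (U q - mn)" for q
  have NU: "int (N q) = U q - mn" if "q \<in> {1..b}" for q unfolding N_def using mn[OF that] by simp
  define w' where "w' = concat (map (\<lambda>q. replicate (N q) q) [1..<b+1])"
  have wo: "word_over b w'" unfolding word_over_def w'_def by auto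
  have cnt: "pos_power_sum w' x 0 = N x" if x: "x \<in> {1..b}" for x
  proof -
    have "pos_power_sum w' x 0 = G w' x (\<lambda>_. 1)" unfolding pps_G by simp
    also have "\<dots> = (\<Sum>q\<in>{1..b}. if q = x then N q else 0)" unfolding w'_def by (rule G_reps)
    also have "\<dots> = N x" using x by simp
    finally show ?thesis .
  qed
  have E: "int (\<Sum>q\<in>{1..b}. enc b L x q * pos_power_sum w' q 0) = - mn * int s" if x: "x \<in> {1..b}" for x
  proof -
    have "int (\<Sum>q\<in>{1..b}. enc b L x q * pos_power_sum w' q 0) = (\<Sum>q\<in>{1..b}. int (enc b L x q) * (U q - mn))"
      unfolding of_nat_sum by (rule sum.cong[OF refl]) (simp add: cnt NU)
    also have "\<dots> = (\<Sum>q\<in>{1..b}. int (enc b L x q) * U q) - mn * (\<Sum>q\<in>{1..b}. int (enc b L x q))"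
      by (simp add: algebra_simps sum_subtractf sum_distrib_left)
    also have "\<dots> = - mn * int s" using ker[OF x] rs[OF x] by simp
    finally show ?thesis .
  qed
  have reg: "regular b 1 (latin_apply b L w')"
  proof (rule reg1[OF ls wo])
    fix x y assume x: "x \<in> {1..b}" and y: "y \<in> {1..b}"
    have "int (\<Sum>q\<in>{1..b}. enc b L x q * pos_power_sum w' q 0) = int (\<Sum>q\<in>{1..b}. enc b L y q * pos_power_sum w' q 0)"
      using E[OF x] E[OF y] by (simp only:)
    then show "(\<Sum>q\<in>{1..b}. enc b L x q * pos_power_sum w' q 0) = (\<Sum>q\<in>{1..b}. enc b L y q * pos_power_sum w' q 0)"
      by (simp only: of_nat_eq_iff)
  qed
  obtain q q' where qq: "q \<in> {1..b}" "q' \<in> {1..b}" "U q \<noteq> U q'" using noncst by blast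
  have Nne: "N q \<noteq> N q'"
  proof
    assume "N q = N q'"
    then have "int (N q) = int (N q')" by simp
    then show False using NU[OF qq(1)] NU[OF qq(2)] qq(3) by simp
  qed
  have nreg: "\<not> regular b 0 w'"
  proof
    assume "regular b 0 w'"
    then have "\<forall>x\<in>{1..b}. \<forall>y\<in>{1..b}. pos_power_sum w' x 0 = pos_power_sum w' y 0"
      unfolding regular_def by (elim allE[of _ 0]) (erule mp, simp)
    then have "pos_power_sum w' q 0 = pos_power_sum w' q' 0" using qq by blast
    then show False using cnt[OF qq(1)] cnt[OF qq(2)] Nne by simp
  qed
  have "\<exists>p\<in>{1..b}. N p > 0"
  proof (cases "N q = 0")
    case True then show ?thesis using Nne qq by auto
  next
    case False then show ?thesis using qq by auto
  qed
  then obtain p where p: "p \<in> {1..b}" "N p > 0" by blast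
  have "N p \<le> (\<Sum>q\<in>{1..b}. N q)" by (rule member_le_sum) (use p in auto)
  then have lpos: "length w' > 0" unfolding w'_def len_reps using p by simp
  show ?thesis using lpos wo reg nreg by blast
qed


theorem mainTheorem2:
  fixes b m :: nat and L :: "nat \<Rightarrow> nat \<Rightarrow> nat" and w :: "nat list" and r :: int
  assumes "b \<ge> 1"
    and "latin_square b L" and "normalized b L"
    and "m \<ge> 1" and "length w = m" and "word_over b w"
    and "r \<ge> -1"
  shows "(regular b r w \<longrightarrow> regular b (r + 1) (latin_apply b L w))
    \<and> (invertible_mat (enc_mat b L) \<and> regular b (r + 1) (latin_apply b L w) \<longrightarrow> regular b r w)
    \<and> (\<not> invertible_mat (enc_mat b L) \<longrightarrow>
         (\<exists>m' w'. m' > 0 \<and> length w' = m' \<and> word_over b w' \<and>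
                  regular b 1 (latin_apply b L w') \<and> \<not> regular b 0 w'))"
proof (intro conjI impI)
  assume "regular b r w"
  then show "regular b (r + 1) (latin_apply b L w)" by (rule part1[OF assms(2) assms(6)])
next
  assume h: "invertible_mat (enc_mat b L) \<and> regular b (r + 1) (latin_apply b L w)"
  have "length w \<ge> 1" using assms(4,5) by simp
  then show "regular b r w" using part2[OF assms(2) assms(6) assms(1)] h by blast
next
  assume "\<not> invertible_mat (enc_mat b L)"
  then show "\<exists>m' w'. m' > 0 \<and> length w' = m' \<and> word_over b w' \<and>
                  regular b 1 (latin_apply b L w') \<and> \<not> regular b 0 w'"
    by (rule part3[OF assms(2) assms(1)])
qed

end
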